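(* Let $k \ge 2$ be an integer. Let $V_0 = \{0\}$, $V_n = \{1,\dots,k\}^n$ for $n \in \mathbb{N}$, and $V = \bigcup_{n \ge 0} V_n$. Define $\pi \colon V \to V \cup \{-1\}$ by $\pi(0) = -1$, $\pi(v) = 0$ for $v \in V_1$, and $\pi(v_1,\dots,v_n) = (v_1,\dots,v_{n-1})$ for $n \ge 2$. Let $G_k$ be the graph with vertex set $V$ whose edges are the pairs $\{v,v'\} \subset V$ with $\pi(v) = v'$ or $\pi(v') = v$ (the infinite rooted $k$-ary tree). Then $\chi_{\star,1}(G_k) = 2$ and $\chi_{\star,2}(G_k) = k+1$.
   Context: Let $G$ be a graph with vertex set $V$, with the graph (shortest path) distance, and let $n, m \in \mathbb{N}$. A function $f \colon V \to \{1,\dots,n\}$ is an $m$-distance clustered $n$-coloring of $G$ if there is a constant $K_\star > 0$ such that for every $i$, every connected component of the subgraph induced by $f^{-1}[\{i\}]$ has at most $K_\star$ vertices, and the distance in $G$ between any two distinct such components (of the same color $i$) is bigger than $m$. The $m$-distance clustered chromatic number $\chi_{\star,m}(G)$ is the least $n \in \mathbb{N}$ for which an $m$-distance clustered $n$-coloring of $G$ exists, and $\infty$ if none exists. *)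

theory Defs
  imports Main "HOL-Library.Extended_Nat"
begin

text \<open>A graph is given by a vertex set V and a symmetric adjacency relation E.\<close>

definition is_walk :: "'a set \<Rightarrow> ('a \<Rightarrow> 'a \<Rightarrow> bool) \<Rightarrow> 'a list \<Rightarrow> bool" where
  "is_walk V E p \<longleftrightarrow> p \<noteq> [] \<and> set p \<subseteq> V \<and> (\<forall>i. Suc i < length p \<longrightarrow> E (p ! i) (p ! Suc i))"

text \<open>Shortest path distance in the graph (infinite if no path exists).\<close>
definition gdist :: "'a set \<Rightarrow> ('a \<Rightarrow> 'a \<Rightarrow> bool) \<Rightarrow> 'a \<Rightarrow> 'a \<Rightarrow> enat" where
  "gdist V E u v = (INF p \<in> {p. is_walk V E p \<and> hd p = u \<and> last p = v}. enat (length p - 1))"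

definition induced_component :: "'a set \<Rightarrow> ('a \<Rightarrow> 'a \<Rightarrow> bool) \<Rightarrow> 'a \<Rightarrow> 'a set" where
  "induced_component S E u = {v. \<exists>p. is_walk S E p \<and> hd p = u \<and> last p = v}"

definition dist_clustered_coloring ::
  "'a set \<Rightarrow> ('a \<Rightarrow> 'a \<Rightarrow> bool) \<Rightarrow> nat \<Rightarrow> nat \<Rightarrow> ('a \<Rightarrow> nat) \<Rightarrow> bool" where
  "dist_clustered_coloring V E m n f \<longleftrightarrow>
     (\<forall>v\<in>V. f v \<in> {1..n}) \<and>
     (\<exists>K::nat. K > 0 \<and>
       (\<forall>i\<in>{1..n}. \<forall>u\<in>{x\<in>V. f x = i}.
          finite (induced_component {x\<in>V. f x = i} E u) \<and>
          card (induced_component {x\<in>V. f x = i} E u) \<le> K)) \<and>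
     (\<forall>i\<in>{1..n}. \<forall>u\<in>{x\<in>V. f x = i}. \<forall>u'\<in>{x\<in>V. f x = i}.
        induced_component {x\<in>V. f x = i} E u \<noteq> induced_component {x\<in>V. f x = i} E u' \<longrightarrow>
        (\<forall>a\<in>induced_component {x\<in>V. f x = i} E u.
          \<forall>b\<in>induced_component {x\<in>V. f x = i} E u'. gdist V E a b > enat m))"

definition dist_clustered_chromatic :: "'a set \<Rightarrow> ('a \<Rightarrow> 'a \<Rightarrow> bool) \<Rightarrow> nat \<Rightarrow> enat" where
  "dist_clustered_chromatic V E m =
     (if \<exists>n f. dist_clustered_coloring V E m n f
      then enat (LEAST n. \<exists>f. dist_clustered_coloring V E m n f) else \<infinity>)"

text \<open>The infinite rooted k-ary tree: vertices are finite sequences over {1..k};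
  the root (0 in the paper) is the empty list; parent of xs@[i] is xs.\<close>
definition tree_V :: "nat \<Rightarrow> nat list set" where
  "tree_V k = {xs. set xs \<subseteq> {1..k}}"

definition tree_E :: "nat \<Rightarrow> nat list \<Rightarrow> nat list \<Rightarrow> bool" where
  "tree_E k v w \<longleftrightarrow> (\<exists>i\<in>{1..k}. w = v @ [i] \<or> v = w @ [i])"

end

theory Submission
  imports Defs
begin

definition RS :: "'a set \<Rightarrow> ('a \<Rightarrow> 'a \<Rightarrow> bool) \<Rightarrow> 'a \<Rightarrow> 'a \<Rightarrow> bool" where
  "RS S E x y \<longleftrightarrow> E x y \<and> x \<in> S \<and> y \<in> S"

lemma is_walk_single[simp]: "is_walk S E [x] \<longleftrightarrow> x \<in> S"
  by (auto simp: is_walk_def)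

lemma is_walk_Cons2[simp]: "is_walk S E (x # y # p) \<longleftrightarrow> x \<in> S \<and> E x y \<and> is_walk S E (y # p)"
proof
  assume h: "is_walk S E (x # y # p)"
  have a: "\<And>i. Suc i < length (x#y#p) \<Longrightarrow> E ((x#y#p) ! i) ((x#y#p) ! Suc i)"
    using h by (auto simp: is_walk_def)
  have "E x y" using a[of 0] by simp
  moreover have "is_walk S E (y # p)" unfolding is_walk_def
  proof (intro conjI allI impI)
    fix i assume "Suc i < length (y#p)" then show "E ((y # p) ! i) ((y # p) ! Suc i)"
      using a[of "Suc i"] by simp
  qed (use h in \<open>auto simp: is_walk_def\<close>)
  ultimately show "x \<in> S \<and> E x y \<and> is_walk S E (y # p)" using h by (auto simp: is_walk_def)
next
  assume h: "x \<in> S \<and> E x y \<and> is_walk S E (y # p)"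
  show "is_walk S E (x # y # p)" unfolding is_walk_def
  proof (intro conjI allI impI)
    fix i assume i: "Suc i < length (x#y#p)"
    show "E ((x#y#p) ! i) ((x#y#p) ! Suc i)"
    proof (cases i)
      case 0 then show ?thesis using h by simp
    next
      case (Suc j) then show ?thesis using h i by (auto simp: is_walk_def)
    qed
  qed (use h in \<open>auto simp: is_walk_def\<close>)
qed

lemma walk_rtranclp: "is_walk S E p \<Longrightarrow> (RS S E)\<^sup>*\<^sup>* (hd p) (last p)"
proof (induction p)
  case Nil then show ?case by (simp add: is_walk_def)
next
  case (Cons a p)
  show ?case
  proof (cases p)
    case Nil then show ?thesis by simp
  next
    case (Cons y q)
    then have "RS S E a y" "is_walk S E p" using Cons.prems by (auto simp: RS_def is_walk_def)
    then show ?thesis using Cons.IH \<open>p = y # q\<close>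
      by (auto intro: converse_rtranclp_into_rtranclp)
  qed
qed

lemma rtranclp_walk: "(RS S E)\<^sup>*\<^sup>* x y \<Longrightarrow> x \<in> S \<Longrightarrow> \<exists>p. is_walk S E p \<and> hd p = x \<and> last p = y"
proof (induction rule: converse_rtranclp_induct)
  case base then show ?case by (intro exI[of _ "[y]"]) simp
next
  case (step x z)
  then have "z \<in> S" "E x z" by (auto simp: RS_def)
  then obtain q where q: "is_walk S E q" "hd q = z" "last q = y" using step by blast
  then have "q \<noteq> []" by (auto simp: is_walk_def)
  then obtain q' where "q = z # q'" using q by (cases q) auto
  then show ?case using q step.prems \<open>E x z\<close> by (intro exI[of _ "x # q"]) auto
qed

lemma comp_eq: "induced_component S E u = {v. u \<in> S \<and> (RS S E)\<^sup>*\<^sup>* u v}"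
proof (intro set_eqI iffI)
  fix v assume "v \<in> induced_component S E u"
  then obtain p where p: "is_walk S E p" "hd p = u" "last p = v" by (auto simp: induced_component_def)
  then have "u \<in> S" by (auto simp: is_walk_def)
  then show "v \<in> {v. u \<in> S \<and> (RS S E)\<^sup>*\<^sup>* u v}" using walk_rtranclp[OF p(1)] p by auto
next
  fix v assume "v \<in> {v. u \<in> S \<and> (RS S E)\<^sup>*\<^sup>* u v}"
  then show "v \<in> induced_component S E u" using rtranclp_walk[of S E u v]
    by (auto simp: induced_component_def)
qed

lemma rtranclp_RS_in: "(RS S E)\<^sup>*\<^sup>* u v \<Longrightarrow> u \<in> S \<Longrightarrow> v \<in> S"
  by (induction rule: rtranclp_induct) (auto simp: RS_def)

lemma comp_sub: "induced_component S E u \<subseteq> S"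
  using rtranclp_RS_in by (auto simp: comp_eq)

lemma comp_self: "u \<in> S \<Longrightarrow> u \<in> induced_component S E u"
  by (auto simp: comp_eq)

lemma comp_same:
  assumes sym: "\<And>x y. E x y \<Longrightarrow> E y x" and a: "a \<in> induced_component S E u"
  shows "induced_component S E a = induced_component S E u"
proof -
  have sy: "symp (RS S E)" by (auto simp: symp_def RS_def intro: sym)
  have u: "u \<in> S" and ua: "(RS S E)\<^sup>*\<^sup>* u a" using a by (auto simp: comp_eq)
  have aS: "a \<in> S" using rtranclp_RS_in[OF ua u] .
  have au: "(RS S E)\<^sup>*\<^sup>* a u" using sympD[OF symp_rtranclp[OF sy] ua] .
  show ?thesis unfolding comp_eq
  proof (intro set_eqI iffI)
    fix v assume "v \<in> {v. a \<in> S \<and> (RS S E)\<^sup>*\<^sup>* a v}"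
    then have "(RS S E)\<^sup>*\<^sup>* a v" by simp
    then show "v \<in> {v. u \<in> S \<and> (RS S E)\<^sup>*\<^sup>* u v}" using u rtranclp_trans[OF ua] by simp
  next
    fix v assume "v \<in> {v. u \<in> S \<and> (RS S E)\<^sup>*\<^sup>* u v}"
    then have "(RS S E)\<^sup>*\<^sup>* u v" by simp
    then show "v \<in> {v. a \<in> S \<and> (RS S E)\<^sup>*\<^sup>* a v}" using aS rtranclp_trans[OF au] by simp
  qed
qed

lemma comp_adj:
  assumes sym: "\<And>x y. E x y \<Longrightarrow> E y x" and a: "a \<in> induced_component S E u"
    and b: "b \<in> induced_component S E u'" and ab: "a = b \<or> E a b"
  shows "induced_component S E u = induced_component S E u'"
proof -
  have aS: "a \<in> S" using subsetD[OF comp_sub a] .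
  have bS: "b \<in> S" using subsetD[OF comp_sub b] .
  have "b \<in> induced_component S E a" using ab
  proof
    assume "a = b" then show ?thesis using comp_self[OF aS] by simp
  next
    assume "E a b" then have "RS S E a b" using aS bS by (simp add: RS_def)
    then show ?thesis using aS by (simp add: comp_eq)
  qed
  then have "induced_component S E b = induced_component S E a" using sym by (intro comp_same)
  moreover have "induced_component S E a = induced_component S E u" using sym a by (intro comp_same)
  moreover have "induced_component S E b = induced_component S E u'" using sym b by (intro comp_same)
  ultimately show ?thesis by simp
qed

lemma gdist_le: "is_walk V E p \<Longrightarrow> hd p = a \<Longrightarrow> last p = b \<Longrightarrow> gdist V E a b \<le> enat (length p - 1)"
  unfolding gdist_def by (rule INF_lower) auto

lemma gdist_gt:
  assumes "\<And>p. is_walk V E p \<Longrightarrow> hd p = a \<Longrightarrow> last p = b \<Longrightarrow> length p > Suc m"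
  shows "gdist V E a b > enat m"
proof -
  have "enat (Suc m) \<le> gdist V E a b" unfolding gdist_def
    by (rule INF_greatest) (use assms in force)
  then show ?thesis by (simp add: Suc_ile_eq)
qed

lemma short_list: "length p \<le> 3 \<Longrightarrow> p \<noteq> [] \<Longrightarrow>
   (\<exists>x. p = [x]) \<or> (\<exists>x y. p = [x, y]) \<or> (\<exists>x y z. p = [x, y, z])"
  by (cases p; cases "tl p"; cases "tl (tl p)"; auto)

lemma gdist_gt1:
  assumes sym: "\<And>x y. E x y \<Longrightarrow> E y x" and "S \<subseteq> V"
    and a: "a \<in> induced_component S E u"
    and b: "b \<in> induced_component S E u'"
    and ne: "induced_component S E u \<noteq> induced_component S E u'"
  shows "gdist V E a b > enat 1"
proof (rule gdist_gt)
  fix p assume p: "is_walk V E p" "hd p = a" "last p = b"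
  show "length p > Suc 1"
  proof (rule ccontr)
    assume nt: "\<not> ?thesis"
    have "a = b \<or> E a b" using p nt
      by (cases p; cases "tl p"; auto simp: is_walk_def)
    then show False using comp_adj[of E, OF sym a b] ne by blast
  qed
qed

lemma gdist_gt2:
  assumes sym: "\<And>x y. E x y \<Longrightarrow> E y x" and "S \<subseteq> V"
    and a: "a \<in> induced_component S E u"
    and b: "b \<in> induced_component S E u'"
    and ne: "induced_component S E u \<noteq> induced_component S E u'"
    and mid: "\<And>x. x \<in> V \<Longrightarrow> E a x \<Longrightarrow> E x b \<Longrightarrow> a = b"
  shows "gdist V E a b > enat 2"
proof (rule gdist_gt)
  fix p assume p: "is_walk V E p" "hd p = a" "last p = b"
  show "length p > Suc 2"
  proof (rule ccontr)
    assume "\<not> ?thesis"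
    then have "length p \<le> 3" "p \<noteq> []" using p by (auto simp: is_walk_def)
    then have "a = b \<or> E a b" using p mid short_list[of p] by auto
    then show False using comp_adj[of E, OF sym a b] ne by blast
  qed
qed


lemma tree_E_sym: "tree_E k x y \<Longrightarrow> tree_E k y x"
  by (auto simp: tree_E_def)

lemma tree_V_snoc[simp]: "v @ [i] \<in> tree_V k \<longleftrightarrow> v \<in> tree_V k \<and> i \<in> {1..k}"
  by (auto simp: tree_V_def)

lemma tree_V_Nil[simp]: "[] \<in> tree_V k" by (simp add: tree_V_def)

primrec tchain :: "(nat list \<Rightarrow> nat) \<Rightarrow> nat \<Rightarrow> nat \<Rightarrow> nat list" where
  "tchain f k 0 = []"
| "tchain f k (Suc n) = tchain f k n @ [SOME i. i \<in> {1..k} \<and> f (tchain f k n @ [i]) = f (tchain f k n)]"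

lemma no_inf:
  assumes dcc: "dist_clustered_coloring (tree_V k) (tree_E k) m n f"
    and ch: "\<forall>v\<in>tree_V k. \<exists>i\<in>{1..k}. f (v @ [i]) = f v"
  shows False
proof -
  let ?V = "tree_V k" let ?c = "f []"
  define S where "S = {x\<in>?V. f x = ?c}"
  have c: "?c \<in> {1..n}" using dcc by (auto simp: dist_clustered_coloring_def)
  obtain K where "\<forall>i\<in>{1..n}. \<forall>u\<in>{x\<in>?V. f x = i}.
          finite (induced_component {x\<in>?V. f x = i} (tree_E k) u)"
    using dcc unfolding dist_clustered_coloring_def by blast
  then have fin: "finite (induced_component S (tree_E k) [])" using c by (auto simp: S_def)
  have inv: "tchain f k j \<in> ?V \<and> f (tchain f k j) = ?c \<and> length (tchain f k j) = j" for j
  proof (induction j)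
    case 0 then show ?case by simp
  next
    case (Suc j)
    let ?x = "tchain f k j"
    have "\<exists>i. i \<in> {1..k} \<and> f (?x @ [i]) = f ?x" using ch Suc by blast
    then have "(SOME i. i \<in> {1..k} \<and> f (?x @ [i]) = f ?x) \<in> {1..k} \<and>
       f (?x @ [SOME i. i \<in> {1..k} \<and> f (?x @ [i]) = f ?x]) = f ?x" by (rule someI_ex)
    then show ?case using Suc by simp
  qed
  have "(RS S (tree_E k))\<^sup>*\<^sup>* [] (tchain f k j)" for j
  proof (induction j)
    case 0 then show ?case by simp
  next
    case (Suc j)
    have "RS S (tree_E k) (tchain f k j) (tchain f k (Suc j))"
      using inv[of j] inv[of "Suc j"] by (auto simp: RS_def S_def tree_E_def)
    then show ?case using Suc by (meson rtranclp.rtrancl_into_rtrancl)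
  qed
  then have "range (tchain f k) \<subseteq> induced_component S (tree_E k) []"
    by (auto simp: comp_eq S_def)
  moreover have "inj (tchain f k)" by (rule injI) (metis inv)
  ultimately show False using fin by (meson finite_imageD finite_subset infinite_UNIV_nat)
qed

lemma prefix_stay:
  assumes "(RS S (tree_E k))\<^sup>*\<^sup>* x y" "\<exists>t. x = (v @ [i]) @ t" "v \<notin> S"
  shows "\<exists>t. y = (v @ [i]) @ t"
  using assms
proof (induction rule: rtranclp_induct)
  case base then show ?case by simp
next
  case (step y z)
  then obtain t where t: "y = (v @ [i]) @ t" by blast
  from step(2) have E: "tree_E k y z" and zS: "z \<in> S" by (auto simp: RS_def)
  then obtain j where "z = y @ [j] \<or> y = z @ [j]" by (auto simp: tree_E_def)
  then show ?case
  proof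
    assume "z = y @ [j]" then show ?thesis using t by auto
  next
    assume h: "y = z @ [j]"
    show ?thesis
    proof (cases t rule: rev_cases)
      case Nil then have "z = v" using h t by simp
      then show ?thesis using zS step by simp
    next
      case (snoc t' j') then show ?thesis using h t by auto
    qed
  qed
qed

lemma pigeon:
  assumes dcc: "dist_clustered_coloring (tree_V k) (tree_E k) 2 n f"
    and nk: "n \<le> k" and v: "v \<in> tree_V k"
  shows "\<exists>i\<in>{1..k}. f (v @ [i]) = f v"
proof (rule ccontr)
  assume ne: "\<not> ?thesis"
  let ?V = "tree_V k"
  let ?g = "\<lambda>i. f (v @ [i])"
  have fv: "f v \<in> {1..n}" using dcc v by (auto simp: dist_clustered_coloring_def)
  have img: "?g ` {1..k} \<subseteq> {1..n} - {f v}" using dcc ne v by (fastforce simp: dist_clustered_coloring_def)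
  have "\<not> inj_on ?g {1..k}"
  proof
    assume "inj_on ?g {1..k}"
    then have "card {1..k} \<le> card ({1..n} - {f v})" using img by (intro card_inj_on_le) auto
    also have "\<dots> = n - 1" using fv by simp
    finally show False using nk fv by simp
  qed
  then obtain i j where ij: "i \<in> {1..k}" "j \<in> {1..k}" "i \<noteq> j" "?g i = ?g j"
    by (auto simp: inj_on_def)
  define c where "c = ?g i"
  define S where "S = {x\<in>?V. f x = c}"
  have c: "c \<in> {1..n}" using img ij unfolding c_def by blast
  have aS: "v @ [i] \<in> S" and bS: "v @ [j] \<in> S" using ij v by (auto simp: S_def c_def)
  have vS: "v \<notin> S" using ne ij by (auto simp: S_def c_def)
  have "gdist ?V (tree_E k) (v @ [i]) (v @ [j]) \<le> enat (length [v @ [i], v, v @ [j]] - 1)"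
    by (rule gdist_le) (use v ij in \<open>auto simp: tree_E_def\<close>)
  then have gle: "\<not> gdist ?V (tree_E k) (v @ [i]) (v @ [j]) > enat 2"
    by (simp add: numeral_2_eq_2 not_less)
  have "induced_component S (tree_E k) (v @ [i]) = induced_component S (tree_E k) (v @ [j])"
  proof (rule ccontr)
    assume "\<not> ?thesis"
    then have "gdist ?V (tree_E k) (v @ [i]) (v @ [j]) > enat 2"
      using dcc c aS bS comp_self[OF aS] comp_self[OF bS]
      unfolding dist_clustered_coloring_def S_def by blast
    then show False using gle by simp
  qed
  then have "v @ [j] \<in> induced_component S (tree_E k) (v @ [i])" using comp_self[OF bS] by simp
  then have "(RS S (tree_E k))\<^sup>*\<^sup>* (v @ [i]) (v @ [j])" by (simp add: comp_eq)
  from prefix_stay[OF this _ vS] obtain t where "v @ [j] = (v @ [i]) @ t" by blast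
  then show False using ij by (cases t) auto
qed


definition Mlist :: "nat \<Rightarrow> nat \<Rightarrow> nat \<Rightarrow> nat list" where
  "Mlist k c p = (if c = p then [] else [c]) @ filter (\<lambda>x. x \<noteq> c \<and> x \<noteq> p) [0..<Suc k]"

primrec str :: "nat \<Rightarrow> nat list \<Rightarrow> nat \<times> nat" where
  "str k [] = (0, 1)"
| "str k (i # r) = (Mlist k (fst (str k r)) (snd (str k r)) ! (i - 1), fst (str k r))"

definition col :: "nat \<Rightarrow> nat list \<Rightarrow> nat" where "col k v = fst (str k (rev v))"
definition par :: "nat \<Rightarrow> nat list \<Rightarrow> nat" where "par k v = snd (str k (rev v))"

lemma col_Nil[simp]: "col k [] = 0" and par_Nil[simp]: "par k [] = 1"
  by (simp_all add: col_def par_def)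

lemma col_snoc: "col k (v @ [i]) = Mlist k (col k v) (par k v) ! (i - 1)"
  and par_snoc[simp]: "par k (v @ [i]) = col k v"
  by (simp_all add: col_def par_def)

lemma Mlist_distinct: "distinct (Mlist k c p)"
  by (auto simp: Mlist_def)

lemma Mlist_set: "c \<le> k \<Longrightarrow> set (Mlist k c p) \<subseteq> {..k}" "p \<notin> set (Mlist k c p)"
  "c \<in> set (Mlist k c p) \<longleftrightarrow> c \<noteq> p"
  by (auto simp: Mlist_def)

lemma Mlist_0: "c \<noteq> p \<Longrightarrow> Mlist k c p ! 0 = c"
  by (simp add: Mlist_def)

lemma Mlist_length:
  assumes "c \<le> k" "p \<le> k"
  shows "length (Mlist k c p) = k"
proof -
  let ?L = "filter (\<lambda>x. x \<noteq> c \<and> x \<noteq> p) [0..<Suc k]"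
  have "length ?L = card (set ?L)" by (rule distinct_card[symmetric]) simp
  also have "set ?L = {..k} - {c, p}" by auto
  also have "card \<dots> = Suc k - card {c, p}"
    by (subst card_Diff_subset) (use assms in auto)
  finally show ?thesis using assms by (cases "c = p") (auto simp: Mlist_def)
qed

context
  fixes k :: nat
  assumes k2: "k \<ge> 2"
begin

lemma inv_range: "v \<in> tree_V k \<Longrightarrow> col k v \<le> k \<and> par k v \<le> k"
proof (induction v rule: rev_induct)
  case Nil then show ?case using k2 by simp
next
  case (snoc i v)
  then have v: "v \<in> tree_V k" "i \<in> {1..k}" by auto
  then have l: "length (Mlist k (col k v) (par k v)) = k" using snoc Mlist_length by auto
  then have "Mlist k (col k v) (par k v) ! (i - 1) \<in> set (Mlist k (col k v) (par k v))"
    using v by (intro nth_mem) auto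
  then show ?case using Mlist_set(1) snoc v by (auto simp: col_snoc)
qed

lemma col_mem: "v \<in> tree_V k \<Longrightarrow> i \<in> {1..k} \<Longrightarrow>
   col k (v @ [i]) \<in> set (Mlist k (col k v) (par k v))"
  using inv_range[of v] Mlist_length[where c="col k v" and p="par k v" and k=k]
  by (auto simp: col_snoc intro!: nth_mem)

lemma col_sib: "v \<in> tree_V k \<Longrightarrow> i \<in> {1..k} \<Longrightarrow> j \<in> {1..k} \<Longrightarrow>
   col k (v @ [i]) = col k (v @ [j]) \<Longrightarrow> i = j"
proof -
  assume v: "v \<in> tree_V k" and i: "i \<in> {1..k}" and j: "j \<in> {1..k}"
    and e: "col k (v @ [i]) = col k (v @ [j])"
  have l: "length (Mlist k (col k v) (par k v)) = k"
    using inv_range[OF v] Mlist_length[where c="col k v" and p="par k v" and k=k] by simp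
  have True by simp
  moreover have "i - 1 < k" "j - 1 < k" using i j by auto
  moreover have "Mlist k (col k v) (par k v) ! (i - 1) = Mlist k (col k v) (par k v) ! (j - 1)"
    using e by (simp add: col_snoc)
  ultimately have "i - 1 = j - 1"
    using nth_eq_iff_index_eq[OF Mlist_distinct[of k "col k v" "par k v"], of "i - 1" "j - 1"] l by simp
  then show "i = j" using i j by (cases i; cases j) auto
qed

lemma col_notpar: "v \<in> tree_V k \<Longrightarrow> i \<in> {1..k} \<Longrightarrow> col k (v @ [i]) \<noteq> par k v"
  using col_mem Mlist_set(2) by metis

lemma col_same: "v \<in> tree_V k \<Longrightarrow> i \<in> {1..k} \<Longrightarrow>
   col k (v @ [i]) = col k v \<longleftrightarrow> col k v \<noteq> par k v \<and> i = 1"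
proof -
  assume v: "v \<in> tree_V k" and i: "i \<in> {1..k}"
  show ?thesis
  proof (cases "col k v = par k v")
    case True then show ?thesis using col_notpar[OF v i] by simp
  next
    case False
    have l: "length (Mlist k (col k v) (par k v)) = k" using inv_range[OF v] Mlist_length by auto
    have "col k (v @ [i]) = col k v \<longleftrightarrow> i - 1 = 0"
      using nth_eq_iff_index_eq[OF Mlist_distinct[of k "col k v" "par k v"], of "i - 1" 0]
        Mlist_0[OF False] l i k2 by (auto simp: col_snoc)
    then show ?thesis using False i by auto
  qed
qed

lemma col_grand: "v \<in> tree_V k \<Longrightarrow> i \<in> {1..k} \<Longrightarrow> j \<in> {1..k} \<Longrightarrow>
   col k (v @ [i] @ [j]) \<noteq> col k v"
  using col_notpar[of "v @ [i]" j] by simp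

lemma closure:
  assumes a: "a \<in> tree_V k" "col k a \<noteq> par k a" and x: "x \<in> {a, a @ [1]}"
    and y: "y \<in> tree_V k" and E: "tree_E k x y" and c: "col k y = col k x"
  shows "y \<in> {a, a @ [1]}"
proof -
  have k1: "1 \<in> {1..k}" using k2 by simp
  have ca1: "col k (a @ [1]) = col k a" using col_same[OF a(1) k1] a(2) by simp
  from E obtain j where j: "j \<in> {1..k}" and jj: "y = x @ [j] \<or> x = y @ [j]"
    by (auto simp: tree_E_def)
  show ?thesis
  proof (cases "x = a")
    case True
    from jj show ?thesis
    proof
      assume "y = x @ [j]" then show ?thesis using col_same[OF a(1) j] c True by auto
    next
      assume "x = y @ [j]"
      then have "par k a = col k y" using True by simp
      then show ?thesis using c True a(2) by simp
    qed
  next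
    case False
    then have xa: "x = a @ [1]" using x by simp
    from jj show ?thesis
    proof
      assume yx: "y = x @ [j]"
      have "x \<in> tree_V k" using xa a k1 by simp
      from col_same[OF this j] have "col k x \<noteq> par k x" using c yx by simp
      then show ?thesis using xa ca1 by simp
    next
      assume "x = y @ [j]" then show ?thesis using xa by simp
    qed
  qed
qed

definition f2 :: "nat list \<Rightarrow> nat" where "f2 v = col k v + 1"

lemma coloring2: "dist_clustered_coloring (tree_V k) (tree_E k) 2 (k + 1) f2"
  unfolding dist_clustered_coloring_def
proof (intro conjI)
  show "\<forall>v\<in>tree_V k. f2 v \<in> {1..k + 1}" using inv_range by (auto simp: f2_def)
next
  have B: "\<forall>i\<in>{1..k + 1}. \<forall>u\<in>{x \<in> tree_V k. f2 x = i}.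
     finite (induced_component {x \<in> tree_V k. f2 x = i} (tree_E k) u) \<and>
     card (induced_component {x \<in> tree_V k. f2 x = i} (tree_E k) u) \<le> 2"
  proof (intro ballI)
    fix i u assume u: "u \<in> {x \<in> tree_V k. f2 x = i}"
    define S where "S = {x \<in> tree_V k. f2 x = i}"
    obtain a where a: "a \<in> tree_V k" "col k a \<noteq> par k a" "u \<in> {a, a @ [1]}"
    proof (cases "col k u = par k u")
      case True
      then have "u \<noteq> []" by auto
      then obtain w j where uw: "u = w @ [j]" by (cases u rule: rev_cases) auto
      then have w: "w \<in> tree_V k" "j \<in> {1..k}" using u by auto
      have "col k u = col k w" using True uw by simp
      then have "col k w \<noteq> par k w \<and> j = 1" using col_same[OF w] uw by simp
      then show ?thesis using that[of w] w uw by auto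
    next
      case False then show ?thesis using that[of u] u by auto
    qed
    have sub: "induced_component S (tree_E k) u \<subseteq> {a, a @ [1]}"
    proof
      fix y assume "y \<in> induced_component S (tree_E k) u"
      then have "(RS S (tree_E k))\<^sup>*\<^sup>* u y" by (simp add: comp_eq)
      then show "y \<in> {a, a @ [1]}"
      proof (induction rule: rtranclp_induct)
        case base then show ?case using a by simp
      next
        case (step y z)
        then have "tree_E k y z" "z \<in> tree_V k" "col k z = col k y"
          by (auto simp: RS_def S_def f2_def)
        then show ?case using closure[OF a(1,2) step.IH] by blast
      qed
    qed
    have "card {a, a @ [1::nat]} \<le> 2" by (simp add: card_insert_le_m1)
    then show "finite (induced_component S (tree_E k) u) \<and>
        card (induced_component S (tree_E k) u) \<le> 2"
      using sub by (meson card_mono finite.emptyI finite_insert finite_subset order_trans)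
  qed
  show "\<exists>K>0. \<forall>i\<in>{1..k + 1}. \<forall>u\<in>{x \<in> tree_V k. f2 x = i}.
     finite (induced_component {x \<in> tree_V k. f2 x = i} (tree_E k) u) \<and>
     card (induced_component {x \<in> tree_V k. f2 x = i} (tree_E k) u) \<le> K"
    apply (rule exI[of _ "2::nat"])
    apply (rule conjI)
     apply simp
    apply (rule B)
    done
next
  show "\<forall>i\<in>{1..k + 1}. \<forall>u\<in>{x \<in> tree_V k. f2 x = i}. \<forall>u'\<in>{x \<in> tree_V k. f2 x = i}.
      induced_component {x \<in> tree_V k. f2 x = i} (tree_E k) u \<noteq>
      induced_component {x \<in> tree_V k. f2 x = i} (tree_E k) u' \<longrightarrow>
      (\<forall>a\<in>induced_component {x \<in> tree_V k. f2 x = i} (tree_E k) u.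
          \<forall>b\<in>induced_component {x \<in> tree_V k. f2 x = i} (tree_E k) u'.
             enat 2 < gdist (tree_V k) (tree_E k) a b)"
  proof (intro ballI impI)
    fix i u u' a b
    define S where "S = {x \<in> tree_V k. f2 x = i}"
    assume ne: "induced_component {x \<in> tree_V k. f2 x = i} (tree_E k) u \<noteq>
      induced_component {x \<in> tree_V k. f2 x = i} (tree_E k) u'"
      and a: "a \<in> induced_component {x \<in> tree_V k. f2 x = i} (tree_E k) u"
      and b: "b \<in> induced_component {x \<in> tree_V k. f2 x = i} (tree_E k) u'"
    have aS: "a \<in> S" using subsetD[OF comp_sub a] unfolding S_def .
    have bS: "b \<in> S" using subsetD[OF comp_sub b] unfolding S_def .
    show "enat 2 < gdist (tree_V k) (tree_E k) a b"
    proof (rule gdist_gt2[OF tree_E_sym _ a b ne])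
      fix x assume x: "x \<in> tree_V k" and ax: "tree_E k a x" and xb: "tree_E k x b"
      have cab: "col k a = col k b" using aS bS by (simp add: S_def f2_def)
      from ax obtain i1 where i1: "i1 \<in> {1..k}" "x = a @ [i1] \<or> a = x @ [i1]"
        by (auto simp: tree_E_def)
      from xb obtain j1 where j1: "j1 \<in> {1..k}" "b = x @ [j1] \<or> x = b @ [j1]"
        by (auto simp: tree_E_def)
      show "a = b"
      proof -
        { assume h: "x = a @ [i1]" "b = x @ [j1]"
          then have False using col_grand[of a i1 j1] aS i1 j1 cab by (simp add: S_def) }
        moreover
        { assume h: "a = x @ [i1]" "x = b @ [j1]"
          then have False using col_grand[of b j1 i1] bS i1 j1 cab by (simp add: S_def) }
        moreover
        { assume h: "a = x @ [i1]" "b = x @ [j1]"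
          then have "i1 = j1" using col_sib[OF x i1(1) j1(1)] cab by simp
          then have "a = b" using h by simp }
        moreover
        { assume h: "x = a @ [i1]" "x = b @ [j1]"
          then have "a = b" by simp }
        ultimately show ?thesis using i1(2) j1(2) by blast
      qed
    qed (simp_all add: Collect_restrict)
  qed
qed

end


definition f1 :: "nat list \<Rightarrow> nat" where "f1 v = length v mod 2 + 1"

lemma f1_E: "tree_E k x y \<Longrightarrow> f1 x \<noteq> f1 y"
  by (auto simp: tree_E_def f1_def) presburger+

lemma coloring1: "dist_clustered_coloring (tree_V k) (tree_E k) 1 2 f1"
  unfolding dist_clustered_coloring_def
proof (intro conjI)
  show "\<forall>v\<in>tree_V k. f1 v \<in> {1..2}" by (auto simp: f1_def)
next
  have B: "\<forall>i\<in>{1..2}. \<forall>u\<in>{x \<in> tree_V k. f1 x = i}.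
     finite (induced_component {x \<in> tree_V k. f1 x = i} (tree_E k) u) \<and>
     card (induced_component {x \<in> tree_V k. f1 x = i} (tree_E k) u) \<le> 1"
  proof (intro ballI)
    fix i u assume u: "u \<in> {x \<in> tree_V k. f1 x = i}"
    define S where "S = {x \<in> tree_V k. f1 x = i}"
    have "induced_component S (tree_E k) u \<subseteq> {u}"
    proof
      fix y assume "y \<in> induced_component S (tree_E k) u"
      then have "(RS S (tree_E k))\<^sup>*\<^sup>* u y" by (simp add: comp_eq)
      then show "y \<in> {u}"
      proof (cases rule: converse_rtranclpE)
        case base then show ?thesis by simp
      next
        case (step z)
        then have "tree_E k u z" "f1 u = f1 z" by (auto simp: RS_def S_def)
        then show ?thesis using f1_E by blast
      qed
    qed
    then show "finite (induced_component S (tree_E k) u) \<and>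
        card (induced_component S (tree_E k) u) \<le> 1"
      by (metis card.empty card.insert finite.emptyI finite.insertI card_mono empty_iff finite_subset One_nat_def)
  qed
  show "\<exists>K>0. \<forall>i\<in>{1..2}. \<forall>u\<in>{x \<in> tree_V k. f1 x = i}.
     finite (induced_component {x \<in> tree_V k. f1 x = i} (tree_E k) u) \<and>
     card (induced_component {x \<in> tree_V k. f1 x = i} (tree_E k) u) \<le> K"
    apply (rule exI[of _ "1::nat"])
    apply (rule conjI)
     apply simp
    apply (rule B)
    done
next
  show "\<forall>i\<in>{1..2}. \<forall>u\<in>{x \<in> tree_V k. f1 x = i}. \<forall>u'\<in>{x \<in> tree_V k. f1 x = i}.
      induced_component {x \<in> tree_V k. f1 x = i} (tree_E k) u \<noteq>
      induced_component {x \<in> tree_V k. f1 x = i} (tree_E k) u' \<longrightarrow>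
      (\<forall>a\<in>induced_component {x \<in> tree_V k. f1 x = i} (tree_E k) u.
          \<forall>b\<in>induced_component {x \<in> tree_V k. f1 x = i} (tree_E k) u'.
             enat 1 < gdist (tree_V k) (tree_E k) a b)"
  proof (intro ballI impI)
    fix i u u' a b
    assume ne: "induced_component {x \<in> tree_V k. f1 x = i} (tree_E k) u \<noteq>
      induced_component {x \<in> tree_V k. f1 x = i} (tree_E k) u'"
      and a: "a \<in> induced_component {x \<in> tree_V k. f1 x = i} (tree_E k) u"
      and b: "b \<in> induced_component {x \<in> tree_V k. f1 x = i} (tree_E k) u'"
    show "enat 1 < gdist (tree_V k) (tree_E k) a b"
      using gdist_gt1[of "tree_E k", OF tree_E_sym Collect_restrict a b ne] by simp
  qed
qed

lemma least_eq:
  assumes "dist_clustered_coloring V E m N f0"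
    and "\<And>n f. dist_clustered_coloring V E m n f \<Longrightarrow> N \<le> n"
  shows "dist_clustered_chromatic V E m = enat N"
proof -
  have "(LEAST n. \<exists>f. dist_clustered_coloring V E m n f) = N"
    by (rule Least_equality) (use assms in blast)+
  then show ?thesis using assms(1) unfolding dist_clustered_chromatic_def by auto
qed

theorem mainTheorem8:
  fixes k :: nat
  assumes "k \<ge> 2"
  shows "dist_clustered_chromatic (tree_V k) (tree_E k) 1 = 2
       \<and> dist_clustered_chromatic (tree_V k) (tree_E k) 2 = enat (k + 1)"
proof
  have "dist_clustered_chromatic (tree_V k) (tree_E k) 1 = enat 2"
  proof (rule least_eq[OF coloring1])
    fix n f assume d: "dist_clustered_coloring (tree_V k) (tree_E k) 1 n f"
    show "2 \<le> n"
    proof (rule ccontr)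
      assume "\<not> 2 \<le> n"
      then have n1: "n \<le> 1" by simp
      have range: "\<forall>v\<in>tree_V k. f v \<in> {1..n}" using d by (simp add: dist_clustered_coloring_def)
      then have "f [] \<in> {1..n}" by simp
      then have all1: "\<forall>v\<in>tree_V k. f v = 1" using range n1 by fastforce
      have "\<forall>v\<in>tree_V k. \<exists>i\<in>{1..k}. f (v @ [i]) = f v"
      proof
        fix v assume v: "v \<in> tree_V k"
        have "1 \<in> {1..k}" using assms by simp
        moreover have "v @ [1] \<in> tree_V k" using v assms by simp
        ultimately show "\<exists>i\<in>{1..k}. f (v @ [i]) = f v" using all1 v by force
      qed
      then show False using no_inf[OF d] by blast
    qed
  qed
  then show "dist_clustered_chromatic (tree_V k) (tree_E k) 1 = 2" by (simp add: numeral_eq_enat)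
next
  show "dist_clustered_chromatic (tree_V k) (tree_E k) 2 = enat (k + 1)"
  proof (rule least_eq[OF coloring2[OF assms]])
    fix n f assume d: "dist_clustered_coloring (tree_V k) (tree_E k) 2 n f"
    show "k + 1 \<le> n"
    proof (rule ccontr)
      assume "\<not> k + 1 \<le> n"
      then have "n \<le> k" by simp
      then have "\<forall>v\<in>tree_V k. \<exists>i\<in>{1..k}. f (v @ [i]) = f v" using pigeon[OF d] by blast
      then show False using no_inf[OF d] by blast
    qed
  qed
qed

end
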